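(* Let $\Omega=\mathsf{tt}\Rightarrow\mathsf{tt}$. Then: (1) for every program term $A\in\mathcal L_a$, $A\preceq\Omega$; (2) $\mathsf{tt}\preceq\Omega$ (i.e. $\to_\Omega$ is reflexive in every $\mathcal L$-model); (3) $\Omega\Omega\preceq\Omega$ (i.e. $\to_\Omega$ is transitive). Consequently $\forall\Omega.(\cdot)$ is an S4 modality and $\to_{\Omega^*}=\to_\Omega$ in every $\mathcal L$-model.
   Context: Fix countable, nonempty, pairwise disjoint sets $\mathrm{AtF}$ (atomic formulas), $\mathrm{AtP}$ (atomic programs) and $I$ (agent names). The formulas $\mathcal L_s$ and programs $\mathcal L_a$ of Type PDL ($\tau$PDL) are generated by $\varphi::=p\mid\neg\varphi\mid\forall A.\varphi\mid \mathsf C_\imath A$ and $A::=a\mid\varphi\mid\varphi\Rightarrow\varphi\mid AA\mid A+A\mid A^*$ with $p\in\mathrm{AtF}$, $a\in\mathrm{AtP}$, $\imath\in I$ (a formula used as a program is a test; $AB$ is sequential composition, $A+B$ choice, $\forall A.\varphi$ is the box $[A]\varphi$). Other connectives are abbreviations, e.g. $\varphi\to\psi:=\forall\varphi.\psi$. $\mathsf{tt}$ is a fixed tautology, $\mathsf{ff}=\neg\mathsf{tt}$, $\Omega:=\mathsf{tt}\Rightarrow\mathsf{tt}$, $\mathrm{AtP}_\Omega=\mathrm{AtP}\cup\{\Omega\}$. $\Sigma$ is the set of programs of the forms $a$, $\varphi$, $\varphi\Rightarrow\psi$; $\tilde\Sigma$ the set of programs of the forms $a$, $\varphi\Rightarrow\psi$;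 $\Sigma^+$ the finite nonempty sequential compositions of elements of $\Sigma$. An $\mathcal L$-model $M$ consists of a nonempty set $W$, a relation $\to_a\subseteq W\times W$ for each $a\in\mathrm{AtP}$, a valuation $\rho:\mathrm{AtF}\to2^W$, and for each $\imath\in I$, $w\in W$ a set $\imath^M(w)\subseteq\bigcup\{\to_A:A\in\Sigma^+\}$. Interpretation: $[\![p]\!]=\rho(p)$, $[\![\neg\varphi]\!]=W\setminus[\![\varphi]\!]$, $[\![\forall A.\varphi]\!]=\{w:\forall w'(w\to_Aw'\Rightarrow w'\in[\![\varphi]\!])\}$; $\to_\varphi=\{(w,w):w\in[\![\varphi]\!]\}$, $\to_{AB}=\to_A\circ\to_B$ (first $A$ then $B$), $\to_{A+B}=\to_A\cup\to_B$, $\to_{A^*}=\bigcup_{n\ge0}(\to_A)^n$, $\to_{\varphi\Rightarrow\psi}=\bigcup\{\to_A: A\in\Sigma^+,\ \forall w\in[\![\varphi]\!]\,\forall w'(w\to_Aw'\Rightarrow w'\in[\![\psi]\!])\}$. Capabilities: $[\![\mathsf C_\imath a]\!]=\{w:\to_a\subseteq\imath^M(w)\}$, $[\![\mathsf C_\imath\varphi]\!]=W$, $[\![\mathsf C_\imath(\varphi\Rightarrow\psi)]\!]=\{w:\to_{\varphi\Rightarrow\psi}\subseteq\imath^M(w)\}$, $[\![\mathsf C_\imath(AB)]\!]=\{w\in[\![\mathsf C_\imath A]\!]:\forall w'(w\to_Aw'\Rightarrow w'\in[\![\mathsf C_\imath B]\!])\}$, $[\![\mathsf C_\imath(A+B)]\!]=[\![\mathsf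 C_\imath A]\!]\cap[\![\mathsf C_\imath B]\!]$, $[\![\mathsf C_\imath A^*]\!]=\bigcup\{[\![\varphi]\!]:[\![\varphi]\!]\subseteq[\![\mathsf C_\imath A]\!]\cap[\![\forall A.\varphi]\!]\}$. Normality condition: $\imath^M(w)=\bigcup\{\to_{\varphi\Rightarrow\psi}:w\in[\![\mathsf C_\imath(\varphi\Rightarrow\psi)]\!]\}\cup\bigcup\{\to_a:w\in[\![\mathsf C_\imath a]\!]\}$. We write $w\models^M\varphi$ iff $w\in[\![\varphi]\!]$; $\varphi$ is valid if true at every state of every $\mathcal L$-model; $\varphi\equiv\psi$ means $[\![\varphi]\!]=[\![\psi]\!]$ in every $\mathcal L$-model; $\vartheta\models\chi$ means every state of every model satisfying $\vartheta$ satisfies $\chi$. For programs, $A\preceq B$ means $\to_A\subseteq\to_B$ in every $\mathcal L$-model (for a sequence, $A_1A_2\cdots A_n\preceq B$ refers to the composed relation). *)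

theory Defs
  imports Main "HOL-Library.Countable"
begin

text \<open>Syntax of Type PDL. 'f = AtF, 'a = AtP, 'i = I.\<close>

datatype ('f, 'a, 'i) form =
    Atom 'f
  | Neg "('f, 'a, 'i) form"
  | Box "('f, 'a, 'i) prog" "('f, 'a, 'i) form"
  | Cap 'i "('f, 'a, 'i) prog"
and ('f, 'a, 'i) prog =
    AtP 'a
  | Test "('f, 'a, 'i) form"
  | Arrow "('f, 'a, 'i) form" "('f, 'a, 'i) form"
  | Seq "('f, 'a, 'i) prog" "('f, 'a, 'i) prog"
  | Choice "('f, 'a, 'i) prog" "('f, 'a, 'i) prog"
  | Star "('f, 'a, 'i) prog"

text \<open>Implication phi --> psi is the box [phi]psi; tt is the fixed tautology p0 --> p0.\<close>
definition imp :: "('f, 'a, 'i) form \<Rightarrow> ('f, 'a, 'i) form \<Rightarrow> ('f, 'a, 'i) form" where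
  "imp \<phi> \<psi> = Box (Test \<phi>) \<psi>"

definition tt :: "('f, 'a, 'i) form" where
  "tt = imp (Atom undefined) (Atom undefined)"

definition Omega :: "('f, 'a, 'i) prog" where
  "Omega = Arrow tt tt"

inductive sigma :: "('f, 'a, 'i) prog \<Rightarrow> bool" where
  "sigma (AtP a)"
| "sigma (Test \<phi>)"
| "sigma (Arrow \<phi> \<psi>)"

inductive sigma_plus :: "('f, 'a, 'i) prog \<Rightarrow> bool" where
  "sigma A \<Longrightarrow> sigma_plus A"
| "sigma_plus A \<Longrightarrow> sigma_plus B \<Longrightarrow> sigma_plus (Seq A B)"

text \<open>An L-model with state set UNIV :: 'w set, atomic relations acc, valuation val,
  agent capabilities ag, together with an interpretation (sem for formulas, rel for programs)
  satisfying all interpretation clauses and the normality condition.\<close>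
definition is_model ::
  "('a \<Rightarrow> 'w rel) \<Rightarrow> ('f \<Rightarrow> 'w set) \<Rightarrow> ('i \<Rightarrow> 'w \<Rightarrow> 'w rel)
   \<Rightarrow> (('f, 'a, 'i) form \<Rightarrow> 'w set) \<Rightarrow> (('f, 'a, 'i) prog \<Rightarrow> 'w rel) \<Rightarrow> bool" where
  "is_model acc val ag sem rel \<longleftrightarrow>
     (\<forall>i w. ag i w \<subseteq> \<Union>{rel A | A. sigma_plus A}) \<and>
     (\<forall>p. sem (Atom p) = val p) \<and>
     (\<forall>\<phi>. sem (Neg \<phi>) = - sem \<phi>) \<and>
     (\<forall>A \<phi>. sem (Box A \<phi>) = {w. \<forall>w'. (w, w') \<in> rel A \<longrightarrow> w' \<in> sem \<phi>}) \<and>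
     (\<forall>a. rel (AtP a) = acc a) \<and>
     (\<forall>\<phi>. rel (Test \<phi>) = {(w, w) | w. w \<in> sem \<phi>}) \<and>
     (\<forall>A B. rel (Seq A B) = rel A O rel B) \<and>
     (\<forall>A B. rel (Choice A B) = rel A \<union> rel B) \<and>
     (\<forall>A. rel (Star A) = (\<Union>n. rel A ^^ n)) \<and>
     (\<forall>\<phi> \<psi>. rel (Arrow \<phi> \<psi>) =
        \<Union>{rel A | A. sigma_plus A \<and>
              (\<forall>w \<in> sem \<phi>. \<forall>w'. (w, w') \<in> rel A \<longrightarrow> w' \<in> sem \<psi>)}) \<and>
     (\<forall>i a. sem (Cap i (AtP a)) = {w. acc a \<subseteq> ag i w}) \<and>
     (\<forall>i \<phi>. sem (Cap i (Test \<phi>)) = UNIV) \<and>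
     (\<forall>i \<phi> \<psi>. sem (Cap i (Arrow \<phi> \<psi>)) = {w. rel (Arrow \<phi> \<psi>) \<subseteq> ag i w}) \<and>
     (\<forall>i A B. sem (Cap i (Seq A B)) =
        {w \<in> sem (Cap i A). \<forall>w'. (w, w') \<in> rel A \<longrightarrow> w' \<in> sem (Cap i B)}) \<and>
     (\<forall>i A B. sem (Cap i (Choice A B)) = sem (Cap i A) \<inter> sem (Cap i B)) \<and>
     (\<forall>i A. sem (Cap i (Star A)) =
        \<Union>{sem \<phi> | \<phi>. sem \<phi> \<subseteq> sem (Cap i A) \<inter> sem (Box A \<phi>)}) \<and>
     (\<forall>i w. ag i w =
        \<Union>{rel (Arrow \<phi> \<psi>) | \<phi> \<psi>. w \<in> sem (Cap i (Arrow \<phi> \<psi>))} \<union>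
        \<Union>{acc a | a. w \<in> sem (Cap i (AtP a))})"

end

theory Submission
  imports Defs
begin

lemma model_facts:
  assumes M: "is_model acc val ag sem rel"
  shows "sem (Box A f) = {w. \<forall>w'. (w, w') \<in> rel A \<longrightarrow> w' \<in> sem f}"
    and "rel (AtP a) = acc a"
    and "rel (Test f) = {(w, w) | w. w \<in> sem f}"
    and "rel (Seq A B) = rel A O rel B"
    and "rel (Choice A B) = rel A \<union> rel B"
    and "rel (Star A) = (\<Union>n. rel A ^^ n)"
    and "rel (Arrow f g) = \<Union>{rel A | A. sigma_plus A \<and>
              (\<forall>w \<in> sem f. \<forall>w'. (w, w') \<in> rel A \<longrightarrow> w' \<in> sem g)}"
  using M unfolding is_model_def by auto

lemma main_aux:
  assumes M: "is_model acc val ag sem rel"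
  shows "sem tt = UNIV" and "rel Omega = \<Union>{rel A | A. sigma_plus A}"
    and "refl (rel Omega)" and "trans (rel Omega)"
    and "\<And>A. rel A \<subseteq> rel Omega"
proof -
  note D = model_facts[OF M]
  show T: "sem tt = UNIV" using D by (auto simp: tt_def imp_def)
  have Om: "rel Omega = \<Union>{rel A | A. sigma_plus A}"
    using D T unfolding Omega_def by auto
  then show "rel Omega = \<Union>{rel A | A. sigma_plus A}" .
  have sp: "\<And>A x y. sigma_plus A \<Longrightarrow> (x,y) \<in> rel A \<Longrightarrow> (x,y) \<in> rel Omega"
    using Om by blast
  have ids: "Id \<subseteq> rel Omega"
  proof
    fix p assume "p \<in> (Id :: 'b rel)"
    then obtain x where p: "p = (x,x)" by auto
    have "(x,x) \<in> rel (Test tt)" using D T by auto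
    moreover have "sigma_plus (Test tt)" by (intro sigma_plus.intros sigma.intros)
    ultimately show "p \<in> rel Omega" using sp p by blast
  qed
  then show R: "refl (rel Omega)" unfolding refl_on_def by auto
  show Tr: "trans (rel Omega)"
  proof (rule transI)
    fix x y z assume "(x,y) \<in> rel Omega" "(y,z) \<in> rel Omega"
    then obtain A B where "sigma_plus A" "(x,y) \<in> rel A" "sigma_plus B" "(y,z) \<in> rel B"
      using Om by blast
    moreover have "rel (Seq A B) = rel A O rel B" using D by blast
    ultimately show "(x,z) \<in> rel Omega"
      using sp[of "Seq A B" x z] sigma_plus.intros(2) by blast
  qed
  have pw: "\<And>n. rel Omega ^^ n \<subseteq> rel Omega"
  proof -
    fix n show "rel Omega ^^ n \<subseteq> rel Omega"
      apply (induct n)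
      using ids Tr apply (auto simp: relpow.simps)
      by (meson subsetD transD)
  qed
  have ind: "sem f = sem f" "rel A \<subseteq> rel Omega" for f A
  proof (induct f and A rule: form.induct prog.induct)
    case (AtP a)
    show ?case by (auto intro: sp sigma_plus.intros sigma.intros)
  next
    case (Test f)
    have "rel (Test f) \<subseteq> Id" unfolding D(3) by blast
    then show ?case using ids by blast
  next
    case (Arrow f g)
    show ?case unfolding D(7)
    proof
      fix p assume "p \<in> \<Union> {rel A |A.
        sigma_plus A \<and> (\<forall>w\<in>sem f. \<forall>w'. (w, w') \<in> rel A \<longrightarrow> w' \<in> sem g)}"
      then obtain A where "sigma_plus A" "p \<in> rel A" by blast
      then show "p \<in> rel Omega" using sp[of A "fst p" "snd p"] by simp
    qed
  next
    case (Seq A B)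
    show ?case unfolding D(4)
    proof
      fix p assume "p \<in> rel A O rel B"
      then obtain x y z where "p = (x,z)" "(x,y) \<in> rel A" "(y,z) \<in> rel B" by blast
      then show "p \<in> rel Omega" using Seq Tr by (meson subsetD transD)
    qed
  next
    case (Choice A B)
    then show ?case unfolding D(5) by blast
  next
    case (Star A)
    have "rel A ^^ n \<subseteq> rel Omega" for n
    proof (induct n)
      case 0 then show ?case using ids by simp
    next
      case (Suc n)
      show ?case
      proof
        fix p assume "p \<in> rel A ^^ Suc n"
        then obtain x y z where "p = (x,z)" "(x,y) \<in> rel A ^^ n" "(y,z) \<in> rel A" by auto
        then show "p \<in> rel Omega" using Suc Star Tr by (meson subsetD transD)
      qed
    qed
    then show ?case unfolding D(6) by blast
  qed simp_all
  then show "\<And>A. rel A \<subseteq> rel Omega" using ind by blast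
qed

theorem mainTheorem1:
  fixes acc :: "'a::countable \<Rightarrow> 'w rel"
    and val :: "'f::countable \<Rightarrow> 'w set"
    and ag :: "'i::countable \<Rightarrow> 'w \<Rightarrow> 'w rel"
    and sem :: "('f, 'a, 'i) form \<Rightarrow> 'w set"
    and rel :: "('f, 'a, 'i) prog \<Rightarrow> 'w rel"
  assumes "is_model acc val ag sem rel"
  shows "(\<forall>A. rel A \<subseteq> rel Omega)
       \<and> rel (Test tt) \<subseteq> rel Omega
       \<and> rel (Seq Omega Omega) \<subseteq> rel Omega
       \<and> refl (rel Omega) \<and> trans (rel Omega)
       \<and> (\<forall>\<phi> \<psi>. sem (Box Omega (imp \<phi> \<psi>)) \<subseteq> sem (imp (Box Omega \<phi>) (Box Omega \<psi>)))
       \<and> (\<forall>\<phi>. sem \<phi> = UNIV \<longrightarrow> sem (Box Omega \<phi>) = UNIV)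
       \<and> (\<forall>\<phi>. sem (Box Omega \<phi>) \<subseteq> sem \<phi>)
       \<and> (\<forall>\<phi>. sem (Box Omega \<phi>) \<subseteq> sem (Box Omega (Box Omega \<phi>)))
       \<and> rel (Star Omega) = rel Omega"
proof -
  note D = model_facts[OF assms]
  note X = main_aux[OF assms]
  have R: "\<And>x. (x,x) \<in> rel Omega" using X(3) by (auto simp: refl_on_def)
  have Tr: "\<And>x y z. (x,y) \<in> rel Omega \<Longrightarrow> (y,z) \<in> rel Omega \<Longrightarrow> (x,z) \<in> rel Omega"
    using X(4) by (meson transD)
  have st: "rel (Star Omega) = rel Omega"
  proof
    have "rel Omega = rel Omega ^^ 1" by simp
    then show "rel Omega \<subseteq> rel (Star Omega)" unfolding D(6) by blast
    show "rel (Star Omega) \<subseteq> rel Omega" using X(5)[of "Star Omega"] .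
  qed
  note box = D(1) and test = D(3) and seq = D(4)
  have K: "\<forall>\<phi> \<psi>. sem (Box Omega (imp \<phi> \<psi>)) \<subseteq> sem (imp (Box Omega \<phi>) (Box Omega \<psi>))"
    unfolding imp_def box test by auto
  have N: "\<forall>\<phi>. sem \<phi> = UNIV \<longrightarrow> sem (Box Omega \<phi>) = UNIV"
    unfolding box by auto
  have Tt: "\<forall>\<phi>. sem (Box Omega \<phi>) \<subseteq> sem \<phi>"
    unfolding box using R by auto
  have F: "\<forall>\<phi>. sem (Box Omega \<phi>) \<subseteq> sem (Box Omega (Box Omega \<phi>))"
    unfolding box using Tr by blast
  have S: "rel (Seq Omega Omega) \<subseteq> rel Omega" unfolding seq using Tr by blast
  show ?thesis
    apply (intro conjI allI)
    using X(3,4,5) st K N Tt F S by blast+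
qed

end
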